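(* Let $n\ge 2$. (i) Every polynomial $f$ of degree $n$ which can be written as $f=gh$ with $g,h$ nonconstant integer-valued polynomials satisfies $P^+(f)\le n$. (ii) There exists a polynomial $f\in\mathbb{Z}[x]$ of degree $n$, reducible in $\mathbb{Q}[x]$, with $P^+(f)=n$. Consequently, the maximum of $P^+(f)$ over polynomials of degree $n$ that are products of two nonconstant integer-valued polynomials, and also over polynomials in $\mathbb{Z}[x]$ of degree $n$ that are reducible in $\mathbb{Q}[x]$, is exactly $n$.
   Context: A polynomial $f\in\mathbb{Q}[x]$ is integer-valued if $f(m)\in\mathbb{Z}$ for every $m\in\mathbb{Z}$. $P^+(f)=\#\{m\in\mathbb{Z}: f(m)>0\text{ and } f(m)\text{ is a prime number}\}$. *)

theory Defs
  imports "HOL-Computational_Algebra.Computational_Algebra"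
begin

definition int_valued :: "rat poly \<Rightarrow> bool" where
  "int_valued f \<longleftrightarrow> (\<forall>m::int. poly f (of_int m) \<in> \<int>)"

text \<open>The set of integers m with f(m) > 0 and f(m) a prime number; P^+(f) is its cardinality.\<close>
definition Pplus_set :: "rat poly \<Rightarrow> int set" where
  "Pplus_set f = {m::int. poly f (of_int m) > 0 \<and>
                   (\<exists>p::int. prime p \<and> poly f (of_int m) = of_int p)}"

definition iv_product :: "rat poly \<Rightarrow> bool" where
  "iv_product f \<longleftrightarrow> (\<exists>g h. int_valued g \<and> int_valued h \<and>
                        degree g > 0 \<and> degree h > 0 \<and> f = g * h)"

end

theory Submission
  imports Defs "Berlekamp_Zassenhaus.Factor_Bound" "HOL-Number_Theory.Pocklington"
begin

definition pd_up :: "real poly \<Rightarrow> real \<Rightarrow> bool" where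
  "pd_up p x \<longleftrightarrow> eventually (\<lambda>t. poly (pderiv p) t > 0) (at_right x)"

lemma no_root_sign:
  fixes q :: "real poly"
  assumes "x < y" "\<forall>t. x < t \<and> t < y \<longrightarrow> poly q t \<noteq> 0"
  shows "(\<forall>t. x < t \<and> t < y \<longrightarrow> poly q t > 0) \<or> (\<forall>t. x < t \<and> t < y \<longrightarrow> poly q t < 0)"
proof (rule ccontr)
  assume "\<not> ?thesis"
  then obtain s t where s: "x < s" "s < y" "poly q s \<le> 0" and t: "x < t" "t < y" "poly q t \<ge> 0"
    by (auto simp: not_less)
  have s0: "poly q s < 0" using s assms(2) by force
  have t0: "poly q t > 0" using t assms(2) by force
  have "s \<noteq> t" using s0 t0 by auto
  then consider "s < t" | "t < s" by linarith
  then show False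
  proof cases
    case 1
    from poly_IVT_pos[OF 1 s0 t0] obtain r where "s < r" "r < t" "poly q r = 0" by auto
    then show False using assms(2) s t by force
  next
    case 2
    from poly_IVT_neg[OF 2 t0 s0] obtain r where "t < r" "r < s" "poly q r = 0" by auto
    then show False using assms(2) s t by force
  qed
qed

lemma strict_inc_of_pos:
  fixes p :: "real poly"
  assumes "\<forall>t. x < t \<and> t < y \<longrightarrow> poly (pderiv p) t > 0" "x \<le> s" "s < t" "t \<le> y"
  shows "poly p s < poly p t"
proof -
  from poly_MVT[OF assms(3), of p] obtain r where r: "s < r" "r < t"
    "poly p t - poly p s = (t - s) * poly (pderiv p) r" by auto
  have "poly (pderiv p) r > 0" using assms r by auto
  with r assms(3) have "poly p t - poly p s > 0" by simp
  then show ?thesis by simp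
qed

lemma strict_dec_of_neg:
  fixes p :: "real poly"
  assumes "\<forall>t. x < t \<and> t < y \<longrightarrow> poly (pderiv p) t < 0" "x \<le> s" "s < t" "t \<le> y"
  shows "poly p s > poly p t"
proof -
  from poly_MVT[OF assms(3), of p] obtain r where r: "s < r" "r < t"
    "poly p t - poly p s = (t - s) * poly (pderiv p) r" by auto
  have "poly (pderiv p) r < 0" using assms r by auto
  with r assms(3) have "poly p t - poly p s < 0" by (simp add: mult_pos_neg)
  then show ?thesis by simp
qed

lemma up_of_pos:
  assumes "x < y" "\<forall>t. x < t \<and> t < y \<longrightarrow> poly (pderiv p) t > 0"
  shows "pd_up p x"
  unfolding pd_up_def eventually_at_right[OF assms(1)] using assms by blast

lemma not_up_of_neg:
  assumes "x < y" "\<forall>t. x < t \<and> t < y \<longrightarrow> poly (pderiv p) t < 0"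
  shows "\<not> pd_up p x"
proof
  assume "pd_up p x"
  moreover have "eventually (\<lambda>t. poly (pderiv p) t < 0) (at_right x)"
    unfolding eventually_at_right[OF assms(1)] using assms by blast
  ultimately have "eventually (\<lambda>t. False) (at_right x)"
    unfolding pd_up_def by eventually_elim auto
  then show False by simp
qed

lemma mono_cases:
  fixes p :: "real poly"
  assumes "x < y" "\<forall>t. x < t \<and> t < y \<longrightarrow> poly (pderiv p) t \<noteq> 0"
  shows "(pd_up p x \<and> (\<forall>t. x < t \<and> t < y \<longrightarrow> poly (pderiv p) t > 0) \<and>
            (\<forall>s t. x \<le> s \<longrightarrow> s < t \<longrightarrow> t \<le> y \<longrightarrow> poly p s < poly p t))
       \<or> (\<not> pd_up p x \<and> (\<forall>t. x < t \<and> t < y \<longrightarrow> poly (pderiv p) t < 0) \<and>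
            (\<forall>s t. x \<le> s \<longrightarrow> s < t \<longrightarrow> t \<le> y \<longrightarrow> poly p s > poly p t))"
  using no_root_sign[OF assms] up_of_pos[OF assms(1)] not_up_of_neg[OF assms(1)]
    strict_inc_of_pos[of x y p] strict_dec_of_neg[of x y p] by blast

lemma up_at_nonroot:
  fixes p :: "real poly"
  assumes "poly (pderiv p) y \<noteq> 0"
  shows "pd_up p y \<longleftrightarrow> poly (pderiv p) y > 0"
proof -
  have cont: "isCont (\<lambda>t. poly (pderiv p) t) y" by simp
  show ?thesis
  proof (cases "poly (pderiv p) y > 0")
    case True
    have "eventually (\<lambda>t. poly (pderiv p) t > 0) (at y)"
      using order_tendstoD(1)[OF cont[unfolded isCont_def] True] .
    then have "eventually (\<lambda>t. poly (pderiv p) t > 0) (at_right y)"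
      by (simp add: eventually_at_split)
    then show ?thesis using True unfolding pd_up_def by simp
  next
    case False
    with assms have neg: "poly (pderiv p) y < 0" by simp
    have "eventually (\<lambda>t. poly (pderiv p) t < 0) (at y)"
      using order_tendstoD(2)[OF cont[unfolded isCont_def] neg] .
    then have ev: "eventually (\<lambda>t. poly (pderiv p) t < 0) (at_right y)"
      by (simp add: eventually_at_split)
    have "\<not> pd_up p y"
    proof
      assume "pd_up p y"
      with ev have "eventually (\<lambda>t. False) (at_right y)"
        unfolding pd_up_def by eventually_elim auto
      then show False by simp
    qed
    then show ?thesis using neg by simp
  qed
qed

lemma up_transfer:
  fixes p :: "real poly"
  assumes "x < y" "\<forall>t. x < t \<and> t < y \<longrightarrow> poly (pderiv p) t \<noteq> 0" "poly (pderiv p) y \<noteq> 0"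
  shows "pd_up p y \<longleftrightarrow> pd_up p x"
proof -
  have m: "(x + y) / 2 > x" "(x + y) / 2 < y" using assms(1) by auto
  from mono_cases[OF assms(1,2)] consider
      (inc) "pd_up p x" "\<forall>t. x < t \<and> t < y \<longrightarrow> poly (pderiv p) t > 0"
    | (dec) "\<not> pd_up p x" "\<forall>t. x < t \<and> t < y \<longrightarrow> poly (pderiv p) t < 0" by blast
  then show ?thesis
  proof cases
    case inc
    have "poly (pderiv p) y > 0"
    proof (rule ccontr)
      assume "\<not> ?thesis"
      with assms(3) have "poly (pderiv p) y < 0" by simp
      moreover have "poly (pderiv p) ((x+y)/2) > 0" using inc m by blast
      ultimately obtain r where "(x+y)/2 < r" "r < y" "poly (pderiv p) r = 0"
        using poly_IVT_neg[OF m(2)] by blast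
      then show False using assms(2) m by force
    qed
    then show ?thesis using inc up_at_nonroot[OF assms(3)] by simp
  next
    case dec
    have "poly (pderiv p) y < 0"
    proof (rule ccontr)
      assume "\<not> ?thesis"
      with assms(3) have "poly (pderiv p) y > 0" by simp
      moreover have "poly (pderiv p) ((x+y)/2) < 0" using dec m by blast
      ultimately obtain r where "(x+y)/2 < r" "r < y" "poly (pderiv p) r = 0"
        using poly_IVT_pos[OF m(2)] by blast
      then show False using assms(2) m by force
    qed
    then show ?thesis using dec up_at_nonroot[OF assms(3)] by simp
  qed
qed

lemma up_neg:
  fixes p :: "real poly"
  assumes "pderiv p \<noteq> 0"
  shows "pd_up (-p) x \<longleftrightarrow> \<not> pd_up p x"
proof -
  define R where "R = {t. x < t \<and> poly (pderiv p) t = 0}"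
  have finR: "finite R" unfolding R_def using poly_roots_finite[OF assms] by (rule rev_finite_subset) auto
  define y where "y = (if R = {} then x + 1 else Min R)"
  have xy: "x < y" unfolding y_def using finR by (auto simp: R_def)
  have nr: "\<forall>t. x < t \<and> t < y \<longrightarrow> poly (pderiv p) t \<noteq> 0"
  proof (intro allI impI)
    fix t assume t: "x < t \<and> t < y"
    show "poly (pderiv p) t \<noteq> 0"
    proof
      assume "poly (pderiv p) t = 0"
      then have "t \<in> R" using t by (simp add: R_def)
      then have "y \<le> t" unfolding y_def using finR by (auto intro: Min_le)
      with t show False by simp
    qed
  qed
  have nr': "\<forall>t. x < t \<and> t < y \<longrightarrow> poly (pderiv (-p)) t \<noteq> 0"
    using nr by (simp add: pderiv_minus)
  from mono_cases[OF xy nr] mono_cases[OF xy nr'] show ?thesis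
    by (auto simp: pderiv_minus) (use xy in \<open>force+\<close>)
qed

definition S_real :: "real poly \<Rightarrow> real poly \<Rightarrow> real set" where
  "S_real g h = {x. poly g x * poly h x > 1 \<and> (\<bar>poly g x\<bar> = 1 \<or> \<bar>poly h x\<bar> = 1)}"

definition phi_u :: "real poly \<Rightarrow> real poly \<Rightarrow> real \<Rightarrow> nat" where
  "phi_u g h x = (if poly g x = 1 then (if pd_up h x then 0 else 1)
     else if poly g x = -1 then (if pd_up h x then 1 else 0)
     else if poly h x = 1 then (if pd_up g x then 0 else 1)
     else (if pd_up g x then 1 else 0))"

definition crit_set :: "real poly \<Rightarrow> real \<Rightarrow> real \<Rightarrow> real set" where
  "crit_set p x y = {t. x < t \<and> t \<le> y \<and> poly (pderiv p) t = 0}"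

definition crit_num :: "real poly \<Rightarrow> real poly \<Rightarrow> real \<Rightarrow> real \<Rightarrow> nat" where
  "crit_num g h x y = card (crit_set g x y) + card (crit_set h x y)"

lemma uu_le1: "phi_u g h x \<le> 1" by (simp add: phi_u_def)

lemma finite_RR: "pderiv p \<noteq> 0 \<Longrightarrow> finite (crit_set p x y)"
  unfolding crit_set_def by (rule rev_finite_subset[OF poly_roots_finite]) auto

lemma typeA_y:
  assumes "y \<in> S_real g h" "poly h y > 1"
  shows "poly g y = 1"
proof -
  have "poly g y * poly h y > 1" "\<bar>poly g y\<bar> = 1 \<or> \<bar>poly h y\<bar> = 1" using assms(1) by (auto simp: S_real_def)
  moreover have "poly g y > 0"
  proof (rule ccontr)
    assume "\<not> poly g y > 0"
    then have "poly g y * poly h y \<le> 0" using assms(2) by (simp add: mult_nonpos_nonneg)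
    with \<open>poly g y * poly h y > 1\<close> show False by simp
  qed
  ultimately show ?thesis using assms(2) by auto
qed

lemma Sr_cases:
  assumes "y \<in> S_real g h"
  shows "(poly g y = 1 \<and> poly h y > 1) \<or> (poly g y = -1 \<and> poly h y < -1) \<or>
         (poly h y = 1 \<and> poly g y > 1) \<or> (poly h y = -1 \<and> poly g y < -1)"
proof -
  have *: "poly g y * poly h y > 1" "\<bar>poly g y\<bar> = 1 \<or> \<bar>poly h y\<bar> = 1" using assms by (auto simp: S_real_def)
  show ?thesis
  proof (cases "\<bar>poly g y\<bar> = 1")
    case True
    then consider "poly g y = 1" | "poly g y = -1" by linarith
    then show ?thesis using *(1) by cases auto
  next
    case False
    with * have "\<bar>poly h y\<bar> = 1" by auto
    then consider "poly h y = 1" | "poly h y = -1" by linarith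
    then show ?thesis using *(1) by cases auto
  qed
qed

lemma card_ge2:
  assumes "finite A" "finite B" "a \<in> A" "b \<in> B"
  shows "card A + card B \<ge> 2"
proof -
  have "card A \<ge> 1" "card B \<ge> 1" using assms by (auto simp: Suc_le_eq card_gt_0_iff)
  then show ?thesis by simp
qed

lemma gapA:
  assumes g0: "pderiv g \<noteq> 0" and h0: "pderiv h \<noteq> 0"
    and xS: "x \<in> S_real g h" and yS: "y \<in> S_real g h" and xy: "x < y" and gx: "poly g x = 1"
  shows "phi_u g h y + 1 \<le> phi_u g h x + crit_num g h x y"
proof -
  have hx: "poly h x > 1" using xS gx by (auto simp: S_real_def)
  have ux: "phi_u g h x = (if pd_up h x then 0 else 1)" using gx by (simp add: phi_u_def)
  have fg: "finite (crit_set g x y)" and fh: "finite (crit_set h x y)" using finite_RR g0 h0 by auto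
  have uy1: "phi_u g h y \<le> 1" by (rule uu_le1)
  show ?thesis
  proof (cases "\<exists>t. x < t \<and> t < y \<and> poly (pderiv g) t = 0")
    case gr: True
    then obtain t1 where t1: "x < t1" "t1 < y" "poly (pderiv g) t1 = 0" by blast
    have t1R: "t1 \<in> crit_set g x y" using t1 by (simp add: crit_set_def)
    show ?thesis
    proof (cases "\<exists>t. x < t \<and> t < y \<and> poly (pderiv h) t = 0")
      case True
      then obtain t2 where "x < t2" "t2 < y" "poly (pderiv h) t2 = 0" by blast
      then have "t2 \<in> crit_set h x y" by (simp add: crit_set_def)
      from card_ge2[OF fg fh t1R this] uy1 show ?thesis by (simp add: crit_num_def)
    next
      case False
      then have nrh: "\<forall>t. x < t \<and> t < y \<longrightarrow> poly (pderiv h) t \<noteq> 0" by blast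
      have N1: "crit_num g h x y \<ge> 1" using fg t1R by (auto simp: crit_num_def Suc_le_eq card_gt_0_iff)
      show ?thesis
      proof (cases "pd_up h x")
        case False
        then show ?thesis using ux uy1 N1 by simp
      next
        case True
        from mono_cases[OF xy nrh] True have hinc: "\<forall>s t. x \<le> s \<longrightarrow> s < t \<longrightarrow> t \<le> y \<longrightarrow> poly h s < poly h t"
          by blast
        from hinc[rule_format, of x y] xy hx have "poly h y > 1" by simp
        then have gy: "poly g y = 1" by (rule typeA_y[OF yS])
        show ?thesis
        proof (cases "poly (pderiv h) y = 0")
          case True
          then have "y \<in> crit_set h x y" using xy by (simp add: crit_set_def)
          from card_ge2[OF fg fh t1R this] uy1 show ?thesis by (simp add: crit_num_def)
        next
          case False
          have "pd_up h y" using up_transfer[OF xy nrh False] True by simp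
          then have "phi_u g h y = 0" using gy by (simp add: phi_u_def)
          then show ?thesis using N1 by simp
        qed
      qed
    qed
  next
    case False
    then have nrg: "\<forall>t. x < t \<and> t < y \<longrightarrow> poly (pderiv g) t \<noteq> 0" by blast
    from mono_cases[OF xy nrg] consider
        (ginc) "pd_up g x" "\<forall>s t. x \<le> s \<longrightarrow> s < t \<longrightarrow> t \<le> y \<longrightarrow> poly g s < poly g t"
      | (gdec) "\<not> pd_up g x" "\<forall>s t. x \<le> s \<longrightarrow> s < t \<longrightarrow> t \<le> y \<longrightarrow> poly g s > poly g t"
      by blast
    note gcases = this
    have gxy: "poly g x \<noteq> poly g y"
      using gcases
    proof cases
      case ginc
      from ginc(2)[rule_format, of x y] xy have "poly g x < poly g y" by simp
      then show ?thesis by simp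
    next
      case gdec
      from gdec(2)[rule_format, of x y] xy have "poly g x > poly g y" by simp
      then show ?thesis by simp
    qed
    have gyne: "poly g y \<noteq> 1" using gxy gx by simp
    have gup_y: "poly (pderiv g) y \<noteq> 0 \<Longrightarrow> pd_up g y = pd_up g x" using up_transfer[OF xy nrg] by simp
    show ?thesis
    proof (cases "\<exists>t. x < t \<and> t < y \<and> poly (pderiv h) t = 0")
      case False
      then have nrh: "\<forall>t. x < t \<and> t < y \<longrightarrow> poly (pderiv h) t \<noteq> 0" by blast
      have nupx: "\<not> pd_up h x"
      proof
        assume U: "pd_up h x"
        from mono_cases[OF xy nrh] U have hi: "\<forall>s t. x \<le> s \<longrightarrow> s < t \<longrightarrow> t \<le> y \<longrightarrow> poly h s < poly h t"
          by blast
        from hi[rule_format, of x y] xy hx have "poly h y > 1" by simp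
        then have "poly g y = 1" by (rule typeA_y[OF yS])
        with gyne show False by simp
      qed
      from mono_cases[OF xy nrh] nupx have hdec: "\<forall>s t. x \<le> s \<longrightarrow> s < t \<longrightarrow> t \<le> y \<longrightarrow> poly h s > poly h t"
        by blast
      have ux1: "phi_u g h x = 1" using ux nupx by simp
      show ?thesis
      proof (cases "crit_num g h x y = 0")
        case False
        then show ?thesis using ux1 uy1 by simp
      next
        case True
        then have "crit_set g x y = {}" "crit_set h x y = {}" using fg fh by (auto simp: crit_num_def)
        then have g'y: "poly (pderiv g) y \<noteq> 0" and h'y: "poly (pderiv h) y \<noteq> 0"
          using xy by (auto simp: crit_set_def)
        have uphy: "\<not> pd_up h y" using up_transfer[OF xy nrh h'y] nupx by simp
        have upgy: "pd_up g y = pd_up g x" using gup_y[OF g'y] .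
        have "phi_u g h y = 0"
          using Sr_cases[OF yS]
        proof (elim disjE conjE)
          assume "poly g y = 1" with gyne show ?thesis by simp
        next
          assume "poly g y = -1" then show ?thesis using uphy by (simp add: phi_u_def)
        next
          assume a: "poly h y = 1" "poly g y > 1"
          have "pd_up g x" using gcases
          proof cases
            case gdec
            from gdec(2)[rule_format, of x y] xy have "poly g y < poly g x" by simp
            with a gx show ?thesis by simp
          qed simp
          then show ?thesis using a upgy by (simp add: phi_u_def)
        next
          assume a: "poly h y = -1" "poly g y < -1"
          have "\<not> pd_up g x" using gcases
          proof cases
            case ginc
            from ginc(2)[rule_format, of x y] xy have "poly g y > poly g x" by simp
            with a gx show ?thesis by simp
          qed simp
          then show ?thesis using a upgy by (simp add: phi_u_def)
        qed
        then show ?thesis using ux1 by simp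
      qed
    next
      case True
      then obtain z where z: "x < z" "z < y" "poly (pderiv h) z = 0" by blast
      have zR: "z \<in> crit_set h x y" using z by (simp add: crit_set_def)
      have N1: "crit_num g h x y \<ge> 1" using fh zR by (auto simp: crit_num_def Suc_le_eq card_gt_0_iff)
      show ?thesis
      proof (cases "pd_up h x \<and> crit_num g h x y = 1")
        case False
        then show ?thesis using ux uy1 N1 by (cases "pd_up h x") auto
      next
        case True
        then have uphx: "pd_up h x" and N: "crit_num g h x y = 1" by auto
        have cardh: "card (crit_set h x y) \<ge> 1" using fh zR by (auto simp: Suc_le_eq card_gt_0_iff)
        with N have "card (crit_set g x y) = 0" by (simp add: crit_num_def)
        then have RgE: "crit_set g x y = {}" using fg by simp
        then have g'y: "poly (pderiv g) y \<noteq> 0" using xy by (auto simp: crit_set_def)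
        have "card (crit_set h x y) = 1" using N RgE by (simp add: crit_num_def)
        then have Rh1: "crit_set h x y = {z}" using zR by (metis card_1_singletonE singletonD)
        have onlyz: "\<And>t. x < t \<Longrightarrow> t \<le> y \<Longrightarrow> poly (pderiv h) t = 0 \<Longrightarrow> t = z"
          using Rh1 by (auto simp: crit_set_def set_eq_iff)
        have h'y: "poly (pderiv h) y \<noteq> 0"
        proof
          assume "poly (pderiv h) y = 0"
          from onlyz[OF xy order.refl this] z(2) show False by simp
        qed
        have nr1: "\<forall>t. x < t \<and> t < z \<longrightarrow> poly (pderiv h) t \<noteq> 0"
        proof (intro allI impI notI)
          fix t assume t: "x < t \<and> t < z" "poly (pderiv h) t = 0"
          have "t \<le> y" using t z by linarith
          from onlyz[OF _ this t(2)] t(1) show False by simp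
        qed
        have nr2: "\<forall>t. z < t \<and> t < y \<longrightarrow> poly (pderiv h) t \<noteq> 0"
        proof (intro allI impI notI)
          fix t assume t: "z < t \<and> t < y" "poly (pderiv h) t = 0"
          have "t \<le> y" "x < t" using t z by linarith+
          from onlyz[OF this(2) this(1) t(2)] t(1) show False by simp
        qed
        from mono_cases[OF z(1) nr1] uphx have hinc1: "\<forall>s t. x \<le> s \<longrightarrow> s < t \<longrightarrow> t \<le> z \<longrightarrow> poly h s < poly h t"
          by blast
        from hinc1[rule_format, of x z] z hx have hz: "poly h z > 1" by simp
        have uphy_z: "pd_up h y = pd_up h z" using up_transfer[OF z(2) nr2 h'y] .
        have nuphy: "\<not> pd_up h y"
        proof
          assume U: "pd_up h y"
          with uphy_z have "pd_up h z" by simp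
          with mono_cases[OF z(2) nr2] have hi: "\<forall>s t. z \<le> s \<longrightarrow> s < t \<longrightarrow> t \<le> y \<longrightarrow> poly h s < poly h t"
            by blast
          from hi[rule_format, of z y] z hz have "poly h y > 1" by simp
          then have "poly g y = 1" by (rule typeA_y[OF yS])
          with gyne show False by simp
        qed
        have upgy: "pd_up g y = pd_up g x" using gup_y[OF g'y] .
        have "phi_u g h y = 0"
          using Sr_cases[OF yS]
        proof (elim disjE conjE)
          assume "poly g y = 1" with gyne show ?thesis by simp
        next
          assume "poly g y = -1" then show ?thesis using nuphy by (simp add: phi_u_def)
        next
          assume a: "poly h y = 1" "poly g y > 1"
          have "pd_up g x" using gcases
          proof cases
            case gdec
            from gdec(2)[rule_format, of x y] xy have "poly g y < poly g x" by simp
            with a gx show ?thesis by simp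
          qed simp
          then show ?thesis using a upgy by (simp add: phi_u_def)
        next
          assume a: "poly h y = -1" "poly g y < -1"
          have "\<not> pd_up g x" using gcases
          proof cases
            case ginc
            from ginc(2)[rule_format, of x y] xy have "poly g y > poly g x" by simp
            with a gx show ?thesis by simp
          qed simp
          then show ?thesis using a upgy by (simp add: phi_u_def)
        qed
        then show ?thesis using N by simp
      qed
    qed
  qed
qed


lemma Sr_swap: "S_real h g = S_real g h"
  unfolding S_real_def by (auto simp: mult.commute)

lemma Sr_neg: "S_real (-g) (-h) = S_real g h"
  unfolding S_real_def by auto

lemma uu_swap:
  assumes "x \<in> S_real g h"
  shows "phi_u h g x = phi_u g h x"
  using Sr_cases[OF assms] by (auto simp: phi_u_def)

lemma uu_neg:
  assumes "pderiv g \<noteq> 0" "pderiv h \<noteq> 0" "x \<in> S_real g h"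
  shows "phi_u (-g) (-h) x = phi_u g h x"
  using Sr_cases[OF assms(3)] up_neg[OF assms(1), of x] up_neg[OF assms(2), of x]
  by (auto simp: phi_u_def)

lemma RR_neg: "crit_set (-p) x y = crit_set p x y"
  unfolding crit_set_def by (auto simp: pderiv_minus)

lemma NN_swap: "crit_num h g x y = crit_num g h x y"
  by (simp add: crit_num_def)

lemma NN_neg: "crit_num (-g) (-h) x y = crit_num g h x y"
  by (simp add: crit_num_def RR_neg)

lemma gap:
  assumes g0: "pderiv g \<noteq> 0" and h0: "pderiv h \<noteq> 0"
    and xS: "x \<in> S_real g h" and yS: "y \<in> S_real g h" and xy: "x < y"
  shows "phi_u g h y + 1 \<le> phi_u g h x + crit_num g h x y"
proof -
  have ng0: "pderiv (-g) \<noteq> 0" and nh0: "pderiv (-h) \<noteq> 0" using g0 h0 by (auto simp: pderiv_minus)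
  from Sr_cases[OF xS] show ?thesis
  proof (elim disjE conjE)
    assume "poly g x = 1"
    from gapA[OF g0 h0 xS yS xy this] show ?thesis .
  next
    assume "poly g x = -1"
    then have "poly (-g) x = 1" by simp
    from gapA[OF ng0 nh0 _ _ xy this] xS yS show ?thesis
      by (simp add: Sr_neg uu_neg[OF g0 h0] NN_neg)
  next
    assume "poly h x = 1"
    from gapA[OF h0 g0 _ _ xy this] xS yS show ?thesis
      by (simp add: Sr_swap uu_swap NN_swap)
  next
    assume "poly h x = -1"
    then have "poly (-h) x = 1" by simp
    from gapA[OF nh0 ng0 _ _ xy this] xS yS h0 g0 show ?thesis
      by (simp add: Sr_neg Sr_swap uu_swap uu_neg[OF g0 h0] NN_neg NN_swap)
  qed
qed

lemma telescope:
  fixes S :: "real set" and u :: "real \<Rightarrow> nat" and N :: "real \<Rightarrow> real \<Rightarrow> nat"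
  assumes fin: "finite S" and ne: "S \<noteq> {}" and u1: "\<forall>x\<in>S. u x \<le> 1"
    and gp: "\<forall>x\<in>S. \<forall>y\<in>S. x < y \<longrightarrow> u y + 1 \<le> u x + N x y"
    and add: "\<forall>x y z. x \<le> y \<longrightarrow> y \<le> z \<longrightarrow> N x z = N x y + N y z"
  shows "card S \<le> 2 + N (Min S) (Max S)"
proof -
  define m where "m = Min S"
  have mS: "m \<in> S" using fin ne by (simp add: m_def)
  have mle: "\<And>x. x \<in> S \<Longrightarrow> m \<le> x" using fin by (simp add: m_def)
  have N0: "N m m = 0" using add[rule_format, of m m m] by simp
  have main: "\<forall>x\<in>S. card {s\<in>S. s < x} = k \<longrightarrow> card {s\<in>S. s \<le> x} + u x \<le> 2 + N m x" for k
  proof (induction k)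
    case 0
    show ?case
    proof (intro ballI impI)
      fix x assume xS: "x \<in> S" and c: "card {s\<in>S. s < x} = 0"
      have fin1: "finite {s\<in>S. s < x}" using fin by simp
      with c have E: "{s\<in>S. s < x} = {}" by simp
      then have "x = m" using mS mle[OF xS] by (metis (mono_tags, lifting) empty_Collect_eq order_le_less)
      have "{s\<in>S. s \<le> x} = {x}" using E xS by force
      moreover have "u x \<le> 1" using u1 xS by blast
      ultimately show "card {s\<in>S. s \<le> x} + u x \<le> 2 + N m x" by simp
    qed
  next
    case (Suc k)
    show ?case
    proof (intro ballI impI)
      fix x assume xS: "x \<in> S" and c: "card {s\<in>S. s < x} = Suc k"
      define L where "L = {s\<in>S. s < x}"
      have finL: "finite L" using fin by (simp add: L_def)
      have Lne: "L \<noteq> {}" using c unfolding L_def by (metis card.empty nat.distinct(1))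
      define p where "p = Max L"
      have pL: "p \<in> L" using finL Lne by (simp add: p_def)
      have pS: "p \<in> S" and px: "p < x" using pL by (auto simp: L_def)
      have ple: "\<And>s. s \<in> L \<Longrightarrow> s \<le> p" using finL by (simp add: p_def)
      have L_eq: "L = insert p {s\<in>S. s < p}"
      proof (intro equalityI subsetI)
        fix s assume sL: "s \<in> L"
        then have "s \<le> p" by (rule ple)
        then show "s \<in> insert p {s\<in>S. s < p}" using sL by (auto simp: L_def order_le_less)
      next
        fix s assume "s \<in> insert p {s\<in>S. s < p}"
        then show "s \<in> L" using pL px by (auto simp: L_def)
      qed
      have "p \<notin> {s\<in>S. s < p}" by simp
      then have "card L = Suc (card {s\<in>S. s < p})" using L_eq fin by simp
      then have cp: "card {s\<in>S. s < p} = k" using c by (simp add: L_def)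
      from Suc.IH pS cp have IH: "card {s\<in>S. s \<le> p} + u p \<le> 2 + N m p" by blast
      have le_eq: "{s\<in>S. s \<le> x} = insert x {s\<in>S. s \<le> p}"
      proof (intro equalityI subsetI)
        fix s assume s: "s \<in> {s\<in>S. s \<le> x}"
        show "s \<in> insert x {s\<in>S. s \<le> p}"
        proof (cases "s = x")
          case False
          with s have "s \<in> L" by (auto simp: L_def)
          then have "s \<le> p" by (rule ple)
          with s show ?thesis by simp
        qed simp
      next
        fix s assume "s \<in> insert x {s\<in>S. s \<le> p}"
        then show "s \<in> {s\<in>S. s \<le> x}" using xS px by auto
      qed
      have "x \<notin> {s\<in>S. s \<le> p}" using px by simp
      then have cx: "card {s\<in>S. s \<le> x} = Suc (card {s\<in>S. s \<le> p})" using le_eq fin by simp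
      have g: "u x + 1 \<le> u p + N p x" using gp pS xS px by blast
      have "N m x = N m p + N p x" using add[rule_format, OF mle[OF pS] less_imp_le[OF px]] .
      then show "card {s\<in>S. s \<le> x} + u x \<le> 2 + N m x" using IH g cx by simp
    qed
  qed
  define M where "M = Max S"
  have MS: "M \<in> S" using fin ne by (simp add: M_def)
  have "{s\<in>S. s \<le> M} = S" using fin by (auto simp: M_def)
  moreover have "card {s\<in>S. s \<le> M} + u M \<le> 2 + N m M" using main[of "card {s\<in>S. s < M}"] MS by blast
  ultimately show ?thesis by (simp add: m_def M_def)
qed


lemma NN_add:
  assumes "pderiv g \<noteq> 0" "pderiv h \<noteq> 0" "x \<le> y" "y \<le> z"
  shows "crit_num g h x z = crit_num g h x y + crit_num g h y z"
proof -
  have *: "card (crit_set p x z) = card (crit_set p x y) + card (crit_set p y z)" if "pderiv p \<noteq> 0" for p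
  proof -
    have "crit_set p x z = crit_set p x y \<union> crit_set p y z" using assms(3,4) by (auto simp: crit_set_def)
    moreover have "crit_set p x y \<inter> crit_set p y z = {}" by (auto simp: crit_set_def)
    ultimately show ?thesis using finite_RR[OF that] by (simp add: card_Un_disjoint)
  qed
  show ?thesis using *[OF assms(1)] *[OF assms(2)] by (simp add: crit_num_def)
qed

lemma card_RR_le:
  assumes "degree p \<ge> 1"
  shows "card (crit_set p x y) \<le> degree p - 1"
proof -
  have p0: "pderiv p \<noteq> 0" using assms by (simp add: pderiv_eq_0_iff)
  have "card (crit_set p x y) \<le> card {t. poly (pderiv p) t = 0}"
    by (rule card_mono[OF poly_roots_finite[OF p0]]) (auto simp: crit_set_def)
  also have "\<dots> \<le> degree (pderiv p)" by (rule card_poly_roots_bound[OF p0])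
  also have "\<dots> = degree p - 1" by (simp add: degree_pderiv)
  finally show ?thesis .
qed

theorem real_bound:
  fixes g h :: "real poly"
  assumes dg: "degree g \<ge> 1" and dh: "degree h \<ge> 1"
  shows "finite (S_real g h) \<and> card (S_real g h) \<le> degree g + degree h"
proof -
  have g0: "pderiv g \<noteq> 0" using dg by (simp add: pderiv_eq_0_iff)
  have h0: "pderiv h \<noteq> 0" using dh by (simp add: pderiv_eq_0_iff)
  have nz: "q * q - 1 \<noteq> 0" if "degree q \<ge> 1" for q :: "real poly"
  proof
    assume "q * q - 1 = 0"
    then have "q * q = 1" by simp
    then have "degree (q * q) = 0" by simp
    moreover have "q \<noteq> 0" using that by auto
    ultimately show False using that by (simp add: degree_mult_eq)
  qed
  have P0: "(g * g - 1) * (h * h - 1) \<noteq> 0" using nz[OF dg] nz[OF dh] by simp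
  have sub: "S_real g h \<subseteq> {x. poly ((g * g - 1) * (h * h - 1)) x = 0}"
  proof
    fix x assume "x \<in> S_real g h"
    then have "\<bar>poly g x\<bar> = 1 \<or> \<bar>poly h x\<bar> = 1" by (simp add: S_real_def)
    then have "poly g x * poly g x = 1 \<or> poly h x * poly h x = 1"
      by (metis abs_mult_self_eq mult_1)
    then show "x \<in> {x. poly ((g * g - 1) * (h * h - 1)) x = 0}" by auto
  qed
  have fin: "finite (S_real g h)" using sub poly_roots_finite[OF P0] by (rule finite_subset)
  show ?thesis
  proof (cases "S_real g h = {}")
    case True then show ?thesis by simp
  next
    case False
    have "card (S_real g h) \<le> 2 + crit_num g h (Min (S_real g h)) (Max (S_real g h))"
    proof (rule telescope[OF fin False])
      show "\<forall>x\<in>S_real g h. phi_u g h x \<le> 1" using uu_le1 by blast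
      show "\<forall>x\<in>S_real g h. \<forall>y\<in>S_real g h. x < y \<longrightarrow> phi_u g h y + 1 \<le> phi_u g h x + crit_num g h x y"
        using gap[OF g0 h0] by blast
      show "\<forall>x y z. x \<le> y \<longrightarrow> y \<le> z \<longrightarrow> crit_num g h x z = crit_num g h x y + crit_num g h y z"
        using NN_add[OF g0 h0] by blast
    qed
    also have "crit_num g h (Min (S_real g h)) (Max (S_real g h)) \<le> (degree g - 1) + (degree h - 1)"
      unfolding crit_num_def using card_RR_le[OF dg] card_RR_le[OF dh] by (intro add_mono)
    finally show ?thesis using fin dg dh by simp
  qed
qed

lemma poly_of_rat_real: "poly (map_poly of_rat p) (of_rat x :: real) = of_rat (poly p x)"
  by (induct p rule: pCons_induct) (auto simp: map_poly_pCons of_rat_add of_rat_mult)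

lemma degree_of_rat_real: "degree (map_poly (of_rat :: rat \<Rightarrow> real) p) = degree p"
  by (rule degree_map_poly) simp

lemma prime_prod_unit:
  fixes a b p :: int
  assumes "prime p" "a * b = p"
  shows "\<bar>a\<bar> = 1 \<or> \<bar>b\<bar> = 1"
proof -
  have "\<bar>a\<bar> dvd p" using assms(2) by (metis abs_dvd_iff dvd_triv_left)
  then have "\<bar>a\<bar> = 1 \<or> \<bar>a\<bar> = p" using assms(1) by (simp add: prime_int_iff)
  then show ?thesis
  proof
    assume "\<bar>a\<bar> = p"
    then have "\<bar>a\<bar> * \<bar>b\<bar> = \<bar>a\<bar>" using assms(2) by (metis abs_mult prime_gt_0_int[OF assms(1)] abs_of_pos)
    moreover have "\<bar>a\<bar> \<noteq> 0" using \<open>\<bar>a\<bar> = p\<close> prime_gt_0_int[OF assms(1)] by simp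
    ultimately show ?thesis by simp
  qed simp
qed

theorem part_i:
  fixes f :: "rat poly"
  assumes "iv_product f"
  shows "finite (Pplus_set f) \<and> card (Pplus_set f) \<le> degree f"
proof -
  obtain g h where gh: "int_valued g" "int_valued h" "degree g > 0" "degree h > 0" "f = g * h"
    using assms by (auto simp: iv_product_def)
  define G where "G = map_poly (of_rat :: rat \<Rightarrow> real) g"
  define H where "H = map_poly (of_rat :: rat \<Rightarrow> real) h"
  have dG: "degree G = degree g" and dH: "degree H = degree h"
    by (simp_all add: G_def H_def degree_of_rat_real)
  have g0: "g \<noteq> 0" and h0: "h \<noteq> 0" using gh by auto
  have df: "degree f = degree g + degree h" using gh g0 h0 by (simp add: degree_mult_eq)
  have RB: "finite (S_real G H) \<and> card (S_real G H) \<le> degree G + degree H"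
    by (rule real_bound) (use gh dG dH in auto)
  have sub: "real_of_int ` Pplus_set f \<subseteq> S_real G H"
  proof
    fix y assume "y \<in> real_of_int ` Pplus_set f"
    then obtain m where m: "m \<in> Pplus_set f" and y: "y = real_of_int m" by auto
    from m obtain p :: int where p: "prime p" "poly f (of_int m) = of_int p" "poly f (of_int m) > 0"
      by (auto simp: Pplus_set_def)
    obtain a where a: "poly g (of_int m) = of_int a"
      using gh(1) unfolding int_valued_def by (metis Ints_cases)
    obtain b where b: "poly h (of_int m) = of_int b"
      using gh(2) unfolding int_valued_def by (metis Ints_cases)
    have "of_int (a * b) = (of_int p :: rat)" using p(2) a b gh(5) by simp
    then have ab: "a * b = p" by (simp only: of_int_eq_iff)
    have ab1: "\<bar>a\<bar> = 1 \<or> \<bar>b\<bar> = 1" by (rule prime_prod_unit[OF p(1) ab])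
    have p2: "p \<ge> 2" using p(1) prime_ge_2_int by blast
    have Gy: "poly G y = real_of_int a"
      using poly_of_rat_real[of g "of_int m"] a by (simp add: G_def y)
    have Hy: "poly H y = real_of_int b"
      using poly_of_rat_real[of h "of_int m"] b by (simp add: H_def y)
    have "poly G y * poly H y = real_of_int p" using Gy Hy ab by (metis of_int_mult)
    moreover have "real_of_int p > 1" using p2 by simp
    moreover have "\<bar>poly G y\<bar> = 1 \<or> \<bar>poly H y\<bar> = 1" using ab1 Gy Hy
      by (metis of_int_1 of_int_abs)
    ultimately show "y \<in> S_real G H" by (simp add: S_real_def)
  qed
  have inj: "inj_on real_of_int (Pplus_set f)" by (rule inj_onI) simp
  have finI: "finite (real_of_int ` Pplus_set f)" using RB sub finite_subset by blast
  have fin: "finite (Pplus_set f)" using finite_imageD[OF finI inj] .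
  have "card (Pplus_set f) = card (real_of_int ` Pplus_set f)" using card_image[OF inj] by simp
  also have "\<dots> \<le> card (S_real G H)" using card_mono RB sub by blast
  also have "\<dots> \<le> degree f" using RB dG dH df by simp
  finally show ?thesis using fin by simp
qed

lemma dvd_pow_minus_one: "(y::'a::comm_ring_1) - 1 dvd y ^ k - 1"
proof (induction k)
  case 0 show ?case by simp
next
  case (Suc k)
  have eq: "y ^ Suc k - 1 = y * (y ^ k - 1) + (y - 1)" by (simp add: algebra_simps)
  show ?case unfolding eq by (intro dvd_add dvd_mult Suc.IH dvd_refl)
qed

definition xpm1 :: "nat \<Rightarrow> int poly" where "xpm1 d = [:0,1:] ^ d - 1"

lemma XM_dvd: assumes "d dvd M" shows "xpm1 d dvd xpm1 M"
proof -
  obtain k where k: "M = d * k" using assms by (elim dvdE)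
  have "xpm1 M = ([:0,1:] ^ d) ^ k - 1" by (simp add: xpm1_def k power_mult)
  then show ?thesis unfolding xpm1_def by (simp add: dvd_pow_minus_one)
qed

lemma poly_XM: "poly (xpm1 d) x = x ^ d - 1"
  by (simp add: xpm1_def poly_power)

lemma poly_pderiv_XM: "poly (pderiv (xpm1 M)) x = of_nat M * x ^ (M - 1)"
proof (cases M)
  case 0 then show ?thesis by (simp add: xpm1_def)
next
  case (Suc m)
  have "pderiv (xpm1 M) = pderiv ([:0,1:] ^ Suc m)"
    unfolding xpm1_def Suc pderiv_diff by simp
  also have "\<dots> = Polynomial.smult (of_nat (Suc m)) ([:0,1:] ^ m) * pderiv [:0,1:]"
    by (rule pderiv_power_Suc)
  finally have "pderiv (xpm1 M) = Polynomial.smult (of_nat (Suc m)) ([:0,1:] ^ m) * pderiv [:0,1:]" .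
  then show ?thesis by (simp add: Suc pderiv_pCons poly_power)
qed

lemma of_int_poly_XM: "poly (of_int_poly (xpm1 d)) (z::complex) = z ^ d - 1"
proof -
  have "of_int_poly (xpm1 d) = ([:0,1:] ^ d - 1 :: complex poly)"
    by (simp add: xpm1_def hom_distribs)
  then show ?thesis by (simp add: poly_power)
qed

lemma cis_pow_ne1:
  assumes "0 < d" "d < M"
  shows "cis (2 * pi / real M) ^ d \<noteq> 1"
proof
  assume "cis (2 * pi / real M) ^ d = 1"
  then have "cis (real d * (2 * pi / real M)) = 1" by (simp add: DeMoivre)
  then have "cos (real d * (2 * pi / real M)) = 1" by (metis cis.simps(1) one_complex.simps(1))
  then obtain k :: int where k: "real d * (2 * pi / real M) = real_of_int k * 2 * pi"
    by (auto simp: cos_one_2pi_int)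
  have M0: "real M > 0" using assms by simp
  from k have "real d * (2 * pi) = real_of_int k * 2 * pi * real M"
    using M0 by (simp add: field_simps)
  then have "real d = real_of_int k * real M" by simp
  then have "int d = k * int M" by (metis of_int_eq_iff of_int_mult of_int_of_nat_eq)
  moreover have "0 < int d" "int d < int M" using assms by auto
  ultimately have dk: "int d = k * int M" "0 < int d" "int d < int M" by auto
  show False
  proof (cases "k \<le> 0")
    case True
    then have "k * int M \<le> 0" by (simp add: mult_nonpos_nonneg)
    with dk show False by simp
  next
    case False
    then have "1 * int M \<le> k * int M" by (intro mult_right_mono) auto
    with dk show False by simp
  qed
qed

lemma cis_pow_M: "M > 0 \<Longrightarrow> cis (2 * pi / real M) ^ M = 1"
  by (simp add: DeMoivre)


lemma infinite_image_mult:
  assumes "M > (0::nat)"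
  shows "infinite ((\<lambda>t. int (M * t)) ` {t. t > 0})"
proof -
  have "inj_on (\<lambda>t. int (M * t)) {t. t > 0}" using assms by (auto intro: inj_onI)
  moreover have "infinite {t::nat. t > 0}"
    by (metis infinite_Ioi greaterThan_def)
  ultimately show ?thesis using finite_imageD by blast
qed

theorem prime_1_mod:
  fixes M :: nat
  assumes M0: "M > 0"
  shows "\<exists>p. prime p \<and> [p = 1] (mod M)"
proof -
  define D where "D = {d. d dvd M \<and> d < M}"
  have finD: "finite D" unfolding D_def by (rule finite_subset[of _ "{..<M}"]) auto
  define L where "L = Lcm (xpm1 ` D)"
  have "L dvd xpm1 M" unfolding L_def by (rule Lcm_least) (auto simp: D_def intro: XM_dvd)
  then obtain Psi where Psi: "xpm1 M = L * Psi" by (elim dvdE)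
  have dL: "\<And>d. d \<in> D \<Longrightarrow> xpm1 d dvd L" unfolding L_def by (rule dvd_Lcm) simp
  define z :: complex where "z = cis (2 * pi / real M)"
  define P where "P = prod xpm1 D"
  have LP: "L dvd P" unfolding L_def P_def by (rule Lcm_least) (auto intro: dvd_prodI[OF finD])
  then obtain Q where Q: "P = L * Q" by (elim dvdE)
  have Pz: "poly (of_int_poly P) z \<noteq> 0"
  proof -
    have "poly (of_int_poly P) z = (\<Prod>d\<in>D. z ^ d - 1)"
      by (simp add: P_def of_int_poly_hom.hom_prod poly_prod of_int_poly_XM)
    also have "\<dots> \<noteq> 0"
    proof -
      have "z ^ d - 1 \<noteq> 0" if "d \<in> D" for d
      proof -
        have "d dvd M" "d < M" using that by (auto simp: D_def)
        moreover then have "d > 0" using M0 by (metis dvd_0_left_iff gr0I less_irrefl)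
        ultimately show ?thesis using cis_pow_ne1[of d M] by (simp add: z_def)
      qed
      then show ?thesis using finD by simp
    qed
    finally show ?thesis .
  qed
  have Lz: "poly (of_int_poly L) z \<noteq> 0"
    using Pz by (simp add: Q of_int_poly_hom.hom_mult)
  have "poly (of_int_poly (xpm1 M)) z = 0" using cis_pow_M[OF M0] by (simp add: of_int_poly_XM z_def)
  then have Psiz: "poly (of_int_poly Psi) z = 0" using Lz by (simp add: Psi of_int_poly_hom.hom_mult)
  have XM0: "xpm1 M \<noteq> 0"
  proof
    assume "xpm1 M = 0"
    then have "poly (xpm1 M) 2 = 0" by simp
    then have "(2::int) ^ M = 1" by (simp add: poly_XM)
    with M0 show False by simp
  qed
  have degPsi: "degree Psi \<noteq> 0"
  proof
    assume "degree Psi = 0"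
    then obtain c where c: "Psi = [:c:]" by (metis degree_eq_zeroE)
    have "of_int_poly [:c:] = [:(of_int c :: complex):]" by (cases "c = 0") (auto simp: map_poly_pCons)
    with Psiz c have "c = 0" by simp
    with c Psi XM0 show False by simp
  qed
  define Z where "Z = {x::int. poly ((Psi + 1) * Psi * (Psi - 1)) x = 0}"
  have nz1: "Psi + 1 \<noteq> 0"
  proof
    assume "Psi + 1 = 0"
    then have "Psi = -1" by (simp add: add_eq_0_iff)
    with degPsi show False by simp
  qed
  have nz2: "Psi - 1 \<noteq> 0"
  proof
    assume "Psi - 1 = 0"
    then have "Psi = 1" by simp
    with degPsi show False by simp
  qed
  have nz0: "Psi \<noteq> 0" using degPsi by auto
  have finZ: "finite Z" unfolding Z_def by (rule poly_roots_finite) (use nz1 nz2 nz0 in simp)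
  have "\<not> (\<lambda>t. int (M * t)) ` {t. t > 0} \<subseteq> Z"
    using infinite_image_mult[OF M0] finZ infinite_super by blast
  then obtain t where t: "t > 0" "int (M * t) \<notin> Z" by blast
  define a where "a = M * t"
  have a0: "a > 0" using M0 t by (simp add: a_def)
  define v where "v = poly Psi (int a)"
  have v: "v \<noteq> 0" "v \<noteq> 1" "v \<noteq> -1" using t(2) by (auto simp: Z_def v_def a_def)
  have "\<not> is_unit v" using v by (auto simp: zdvd1_eq abs_if split: if_splits)
  then obtain q where q: "q dvd v" "prime q" using prime_divisor_exists v(1) by blast
  have q0: "q > 0" using q(2) prime_gt_0_int by blast
  define p where "p = nat q"
  have qp: "q = int p" using q0 by (simp add: p_def)
  have pp: "prime p" using q(2) qp by simp
  have p2: "p \<ge> 2" using prime_ge_2_nat[OF pp] .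
  have eqa: "int a ^ M - 1 = poly L (int a) * v"
    using arg_cong[OF Psi, of "\<lambda>r. poly r (int a)"] by (simp add: poly_XM v_def)
  have qdiv: "q dvd int a ^ M - 1" unfolding eqa using q(1) by simp
  have cong_aM: "[a ^ M = 1] (mod p)"
  proof -
    have "int p dvd int (a ^ M) - int 1" using qdiv qp by simp
    then have "[int (a ^ M) = int 1] (mod int p)" by (simp add: cong_iff_dvd_diff)
    then show ?thesis by (simp only: cong_int_iff)
  qed
  have pna: "\<not> p dvd a"
  proof
    assume "p dvd a"
    then have "p dvd a ^ M" using M0 by (metis dvd_power dvd_trans)
    then have "[a ^ M = 0] (mod p)" by (simp add: cong_0_iff)
    with cong_aM have "[1 = 0] (mod p)" by (metis cong_sym cong_trans)
    then show False using p2 by (simp add: cong_def)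
  qed
  have pnM: "\<not> p dvd M"
  proof
    assume "p dvd M"
    then have "p dvd a" by (simp add: a_def)
    with pna show False by simp
  qed
  define k where "k = ord p a"
  have kM: "k dvd M" unfolding k_def using ord_divides[of a M p] cong_aM by blast
  have k0: "k > 0" using kM M0 by (metis dvd_0_left_iff gr0I)
  have ak: "[a ^ k = 1] (mod p)" unfolding k_def using ord_divides[of a "ord p a" p] dvd_refl by blast
  show ?thesis
  proof (cases "k = M")
    case True
    have "[a ^ (p - 1) = 1] (mod p)" by (rule fermat_theorem[OF pp pna])
    then have "k dvd p - 1" unfolding k_def using ord_divides[of a "p - 1" p] by blast
    then have "M dvd p - 1" using True by simp
    then have "[p - 1 = 0] (mod M)" by (simp add: cong_0_iff)
    then have "[p - 1 + 1 = 0 + 1] (mod M)" by (rule cong_add) simp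
    then have "[p = 1] (mod M)" using p2 by simp
    then show ?thesis using pp by blast
  next
    case False
    with kM have "k < M" using dvd_imp_le[OF kM M0] by simp
    then have kD: "k \<in> D" using kM by (simp add: D_def)
    from dL[OF kD] obtain R where R: "L = xpm1 k * R" by (elim dvdE)
    have XMM: "xpm1 M = xpm1 k * (R * Psi)" using Psi R by (simp add: mult.assoc)
    have "poly (pderiv (xpm1 M)) (int a) = poly (pderiv (xpm1 k)) (int a) * (poly R (int a) * v)
          + (int a ^ k - 1) * poly (pderiv (R * Psi)) (int a)"
      unfolding XMM by (simp add: pderiv_mult poly_XM v_def algebra_simps)
    moreover have "q dvd int a ^ k - 1"
    proof -
      have "[int (a ^ k) = int 1] (mod int p)" using ak by (simp only: cong_int_iff)
      then have "int p dvd int (a ^ k) - int 1" by (simp add: cong_iff_dvd_diff)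
      then show ?thesis using qp by simp
    qed
    ultimately have "q dvd poly (pderiv (xpm1 M)) (int a)" using q(1)
      by (simp add: dvd_add dvd_mult)
    then have "q dvd int M * int a ^ (M - 1)" by (simp add: poly_pderiv_XM)
    then have "q dvd int M \<or> q dvd int a ^ (M - 1)" using q(2) by (simp add: prime_dvd_mult_iff)
    then show ?thesis
    proof
      assume "q dvd int M" then have "p dvd M" using qp by simp
      with pnM show ?thesis by simp
    next
      assume "q dvd int a ^ (M - 1)"
      then have "q dvd int a" using q(2) prime_dvd_power by blast
      then have "p dvd a" using qp by simp
      with pna show ?thesis by simp
    qed
  qed
qed

lemma exists_primes_card:
  "\<exists>P::nat set. finite P \<and> card P = k \<and> (\<forall>p\<in>P. prime p)"
proof -
  have "infinite {p::nat. prime p}" by (rule primes_infinite)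
  then have "\<exists>B. finite B \<and> card B = k \<and> B \<subseteq> {p::nat. prime p}" by (rule infinite_arbitrarily_large)
  then show ?thesis
  proof (elim exE conjE)
    fix B assume B: "finite B" "card B = k" "B \<subseteq> {p::nat. prime p}"
    then show ?thesis by (intro exI[of _ B]) auto
  qed
qed

lemma poly_prod_lin: "poly (\<Prod>p\<in>P. [:- int p, 1:]) x = (\<Prod>p\<in>P. x - int p)"
  by (simp add: poly_prod)

lemma degree_prod_lin:
  assumes "finite P"
  shows "degree (\<Prod>p\<in>P. [:- int p, 1:]) = card P"
  using assms
proof (induction P rule: finite_induct)
  case empty then show ?case by simp
next
  case (insert x P)
  have nz: "(\<Prod>p\<in>P. [:- int p, 1:]) \<noteq> 0" by (simp add: prod_zero_iff[OF insert(1)])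
  have "(\<Prod>p\<in>insert x P. [:- int p, 1:]) = [:- int x, 1:] * (\<Prod>p\<in>P. [:- int p, 1:])"
    by (rule prod.insert[OF insert(1,2)])
  also have "degree \<dots> = degree [:- int x, 1:] + degree (\<Prod>p\<in>P. [:- int p, 1:])"
    by (rule degree_mult_eq) (use nz in simp_all)
  also have "\<dots> = Suc (card P)" using insert(3) by simp
  finally have "degree (\<Prod>p\<in>insert x P. [:- int p, 1:]) = Suc (card P)" .
  then show ?case using card_insert_disjoint[OF insert(1,2)] by (simp only:)
qed

lemma abs_prod_lin1:
  assumes "finite P" "\<forall>p\<in>P. p \<ge> 1"
  shows "\<bar>\<Prod>p\<in>P. (1::int) - int p\<bar> = int (\<Prod>p\<in>P. p - 1)"
proof -
  have "\<bar>\<Prod>p\<in>P. (1::int) - int p\<bar> = (\<Prod>p\<in>P. \<bar>1 - int p\<bar>)" by (simp add: abs_prod)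
  also have "\<dots> = (\<Prod>p\<in>P. int (p - 1))" using assms(2) by (intro prod.cong) auto
  also have "\<dots> = int (\<Prod>p\<in>P. p - 1)" by simp
  finally show ?thesis .
qed

lemma mem_Pplus:
  assumes "poly F (of_int m) = of_int (int p)" "prime p"
  shows "m \<in> Pplus_set F"
proof -
  have "prime (int p)" using assms(2) by simp
  moreover have "(of_int (int p) :: rat) > 0" using prime_gt_0_nat[OF assms(2)] by simp
  ultimately show ?thesis unfolding Pplus_set_def using assms(1)
    by (intro CollectI conjI exI[of _ "int p"]) simp_all
qed

lemma construction:
  fixes n :: nat
  assumes n2: "n \<ge> 2"
  shows "\<exists>f::int poly. degree f = n \<and> iv_product (map_poly of_int f)
           \<and> \<not> irreducible (map_poly (of_int :: int \<Rightarrow> rat) f)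
           \<and> finite (Pplus_set (map_poly of_int f)) \<and> card (Pplus_set (map_poly of_int f)) = n"
proof -
  obtain P :: "nat set" where P: "finite P" "card P = n - 1" "\<forall>p\<in>P. prime p"
    using exists_primes_card by blast
  have P2: "\<forall>p\<in>P. p \<ge> 2" using P(3) prime_ge_2_nat by blast
  define M where "M = (\<Prod>p\<in>P. p - 1)"
  have M0: "M > 0" unfolding M_def using P2 by (intro prod_pos) auto
  obtain q where q: "prime q" "[q = 1] (mod M)" using prime_1_mod[OF M0] by blast
  have q2: "q \<ge> 2" using prime_ge_2_nat[OF q(1)] .
  define Q where "Q = (\<Prod>p\<in>P. [:- int p, 1:])"
  define Q1 where "Q1 = poly Q 1"
  have Q1eq: "Q1 = (\<Prod>p\<in>P. 1 - int p)" unfolding Q1_def Q_def poly_prod_lin by simp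
  have P1': "\<forall>p\<in>P. p \<ge> 1" using P2 by auto
  have absQ1: "\<bar>Q1\<bar> = int M" unfolding Q1eq M_def by (rule abs_prod_lin1[OF P(1) P1'])
  have "M dvd q - 1" using q(2) by (rule cong_to_1_nat)
  then have "int M dvd int (q - 1)" by (simp only: int_dvd_int_iff)
  moreover have "int (q - 1) = int q - 1" using q2 by simp
  ultimately have "\<bar>Q1\<bar> dvd int q - 1" using absQ1 by simp
  then have Q1dvd: "Q1 dvd int q - 1" by (simp only: abs_dvd_iff)
  define c where "c = (int q - 1) div Q1"
  have cQ1: "c * Q1 = int q - 1" unfolding c_def using Q1dvd by simp
  have c0: "c \<noteq> 0" using cQ1 q2 by auto
  define h where "h = 1 + Polynomial.smult c Q"
  define f where "f = [:0,1:] * h"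
  have degQ: "degree Q = n - 1" using degree_prod_lin[OF P(1)] P(2) by (simp add: Q_def)
  have degh: "degree h = n - 1"
  proof -
    have "degree (Polynomial.smult c Q) = n - 1" using c0 degQ by simp
    moreover have "n - 1 \<ge> 1" using n2 by simp
    ultimately have "degree (1::int poly) < degree (Polynomial.smult c Q)" by simp
    then show ?thesis unfolding h_def using degree_add_eq_right \<open>degree (Polynomial.smult c Q) = n - 1\<close> by metis
  qed
  have h0: "h \<noteq> 0"
  proof
    assume "h = 0"
    then have "degree h = 0" by simp
    with degh n2 show False by simp
  qed
  have degf: "degree f = n" using degh h0 n2 unfolding f_def by (simp add: degree_mult_eq)
  have hp: "poly h (int p) = 1" if "p \<in> P" for p
  proof -
    have "poly Q (int p) = 0" unfolding Q_def poly_prod_lin using P(1) that by (simp add: prod_zero_iff)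
    then show ?thesis by (simp add: h_def)
  qed
  have h1: "poly h 1 = int q" using cQ1 by (simp add: h_def Q1_def)
  define F where "F = (map_poly of_int f :: rat poly)"
  define H where "H = (map_poly of_int h :: rat poly)"
  have FH: "F = [:0,1:] * H" by (simp add: F_def H_def f_def hom_distribs)
  have degH: "degree H = n - 1" by (simp add: H_def degh)
  have degF: "degree F = n" by (simp add: F_def degf)
  have ivH: "int_valued H" unfolding int_valued_def H_def by (simp add: of_int_hom.poly_map_poly)
  have ivX: "int_valued [:0,1:]" unfolding int_valued_def by simp
  have ivp: "iv_product F" unfolding iv_product_def using ivH ivX degH n2 FH by (intro exI[of _ "[:0,1:]"] exI[of _ H]) auto
  have PI: "finite (Pplus_set F) \<and> card (Pplus_set F) \<le> n" using part_i[OF ivp] degF by simp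
  have polyF: "poly F (of_int m) = of_int (poly f m)" for m by (simp add: F_def of_int_hom.poly_map_poly)
  have sub: "insert 1 (int ` P) \<subseteq> Pplus_set F"
  proof
    fix m assume "m \<in> insert 1 (int ` P)"
    then consider "m = 1" | p where "p \<in> P" "m = int p" by auto
    then show "m \<in> Pplus_set F"
    proof cases
      case 1
      have "poly f m = int q" using 1 by (simp add: f_def h1)
      then have "poly F (of_int m) = of_int (int q)" using polyF[of m] by simp
      then show ?thesis using q(1) by (rule mem_Pplus)
    next
      case 2
      have "poly f m = int p" using 2 hp by (simp add: f_def)
      then have "poly F (of_int m) = of_int (int p)" using polyF[of m] by simp
      moreover have "prime p" using P(3) 2 by blast
      ultimately show ?thesis by (rule mem_Pplus)
    qed
  qed
  have n1: "1 \<notin> int ` P" using P2 by auto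
  have "card (int ` P) = n - 1" using P(2) by (simp add: card_image)
  then have "card (insert 1 (int ` P)) = Suc (n - 1)"
    using P(1) n1 by simp
  then have ci: "card (insert 1 (int ` P)) = n" using n2 by simp
  have "card (insert 1 (int ` P)) \<le> card (Pplus_set F)"
    using PI sub by (intro card_mono) auto
  then have "card (Pplus_set F) \<ge> n" using ci by simp
  then have cardF: "card (Pplus_set F) = n" using PI by simp
  have nirr: "\<not> irreducible F"
  proof
    assume irrF: "irreducible F"
    have "is_unit [:0,1:] \<or> is_unit H" using irreducibleD[OF irrF FH] by simp
    moreover have "\<not> is_unit ([:0,1:] :: rat poly)" by (simp add: is_unit_poly_iff)
    moreover have "\<not> is_unit H" using degH n2 by (auto simp: is_unit_poly_iff)
    ultimately show False by blast
  qed
  show ?thesis using degf ivp nirr PI cardF unfolding F_def by blast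
qed

lemma int_reducible_iv:
  fixes f :: "int poly"
  assumes deg: "degree f \<ge> 1" and red: "\<not> irreducible (map_poly (of_int :: int \<Rightarrow> rat) f)"
  shows "iv_product (map_poly of_int f)"
proof -
  define F where "F = (map_poly (of_int :: int \<Rightarrow> rat) f)"
  have degF: "degree F = degree f" by (simp add: F_def)
  have F0: "F \<noteq> 0" using deg degF by auto
  have Fnu: "\<not> is_unit F" using deg degF by (auto simp: is_unit_poly_iff)
  from red have "\<not> irreducible F" by (simp add: F_def)
  with F0 Fnu obtain a b where ab: "F = a * b" "\<not> is_unit a" "\<not> is_unit b"
    unfolding irreducible_def by blast
  have a0: "a \<noteq> 0" and b0: "b \<noteq> 0" using ab F0 by auto
  have da: "degree a > 0"
  proof (rule ccontr)
    assume "\<not> degree a > 0"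
    then obtain c where c: "a = [:c:]" by (metis degree_eq_zeroE gr0I)
    with a0 have "c \<noteq> 0" by simp
    with c have "is_unit a" by (simp add: is_unit_poly_iff)
    with ab show False by simp
  qed
  have db: "degree b > 0"
  proof (rule ccontr)
    assume "\<not> degree b > 0"
    then obtain c where c: "b = [:c:]" by (metis degree_eq_zeroE gr0I)
    with b0 have "c \<noteq> 0" by simp
    with c have "is_unit b" by (simp add: is_unit_poly_iff)
    with ab show False by simp
  qed
  have "map_poly rat_of_int f = a * b" using ab by (simp add: F_def)
  from rat_to_int_factor[OF this] obtain g' h' where
    gh: "f = g' * h'" "degree g' = degree a" "degree h' = degree b" by blast
  define G where "G = (map_poly (of_int :: int \<Rightarrow> rat) g')"
  define H where "H = (map_poly (of_int :: int \<Rightarrow> rat) h')"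
  have FGH: "map_poly of_int f = G * H" by (simp add: G_def H_def gh(1) of_int_poly_hom.hom_mult)
  have ivG: "int_valued G" unfolding int_valued_def G_def by (simp add: of_int_hom.poly_map_poly)
  have ivH: "int_valued H" unfolding int_valued_def H_def by (simp add: of_int_hom.poly_map_poly)
  have dG: "degree G > 0" using gh(2) da by (simp add: G_def)
  have dH: "degree H > 0" using gh(3) db by (simp add: H_def)
  show ?thesis unfolding iv_product_def using ivG ivH dG dH FGH by blast
qed

theorem theorem3:
  fixes n :: nat
  assumes "n \<ge> 2"
  shows "(\<forall>f::rat poly. degree f = n \<and> iv_product f \<longrightarrow>
            finite (Pplus_set f) \<and> card (Pplus_set f) \<le> n)
       \<and> (\<exists>f::int poly. degree f = n \<and> \<not> irreducible (map_poly (of_int :: int \<Rightarrow> rat) f)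
            \<and> finite (Pplus_set (map_poly of_int f))
            \<and> card (Pplus_set (map_poly of_int f)) = n)
       \<and> Max {card (Pplus_set f) | f::rat poly. degree f = n \<and> iv_product f} = n
       \<and> Max {card (Pplus_set (map_poly of_int f)) | f::int poly.
               degree f = n \<and> \<not> irreducible (map_poly (of_int :: int \<Rightarrow> rat) f)} = n"
proof -
  have I: "\<forall>f::rat poly. degree f = n \<and> iv_product f \<longrightarrow>
            finite (Pplus_set f) \<and> card (Pplus_set f) \<le> n"
    using part_i by blast
  obtain f0 :: "int poly" where f0: "degree f0 = n" "iv_product (map_poly of_int f0)"
     "\<not> irreducible (map_poly (of_int :: int \<Rightarrow> rat) f0)"
     "finite (Pplus_set (map_poly of_int f0))" "card (Pplus_set (map_poly of_int f0)) = n"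
    using construction[OF assms] by blast
  have II: "\<exists>f::int poly. degree f = n \<and> \<not> irreducible (map_poly (of_int :: int \<Rightarrow> rat) f)
            \<and> finite (Pplus_set (map_poly of_int f))
            \<and> card (Pplus_set (map_poly of_int f)) = n"
    using f0 by blast
  define A where "A = {card (Pplus_set f) | f::rat poly. degree f = n \<and> iv_product f}"
  have Ale: "\<forall>x\<in>A. x \<le> n" unfolding A_def using I by blast
  have nA: "n \<in> A" unfolding A_def using f0
    by (intro CollectI exI[of _ "map_poly of_int f0"]) simp
  have finA: "finite A" using Ale by (intro finite_subset[of A "{..n}"]) auto
  have III: "Max A = n" by (rule Max_eqI[OF finA]) (use Ale nA in auto)
  define B where "B = {card (Pplus_set (map_poly of_int f)) | f::int poly.
               degree f = n \<and> \<not> irreducible (map_poly (of_int :: int \<Rightarrow> rat) f)}"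
  have Ble: "\<forall>x\<in>B. x \<le> n"
  proof
    fix x assume "x \<in> B"
    then obtain f :: "int poly" where f: "x = card (Pplus_set (map_poly of_int f))" "degree f = n"
      "\<not> irreducible (map_poly (of_int :: int \<Rightarrow> rat) f)" unfolding B_def by blast
    have "degree f \<ge> 1" using f(2) assms by simp
    from int_reducible_iv[OF this f(3)] have "iv_product (map_poly of_int f)" .
    moreover have "degree (map_poly (of_int :: int \<Rightarrow> rat) f) = n" using f(2) by simp
    ultimately show "x \<le> n" using I f(1) by blast
  qed
  have nB: "n \<in> B" unfolding B_def
    by (rule CollectI, rule exI[of _ f0]) (use f0 in auto)
  have finB: "finite B" using Ble by (intro finite_subset[of B "{..n}"]) auto
  have IV: "Max B = n" by (rule Max_eqI[OF finB]) (use Ble nB in auto)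
  show ?thesis using I II III IV unfolding A_def B_def by blast
qed

end
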